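(* Let $G$ and $H$ be finite simple graphs. Two vertices $(g,h)$ and $(g',h')$ of $G\diamond H$ satisfy $N_{G\diamond H}[(g,h)]=N_{G\diamond H}[(g',h')]$ if and only if (i) $N_G[g]=N_G[g']$ and $N_H[h]=N_H[h']$, or (ii) $\{g,g'\}$ is a $\gamma_G$-pair and $\{h,h'\}$ is a $\gamma_H$-pair.
   Context: The modular product $G\diamond H$ has vertex set $V(G)\times V(H)$; distinct vertices $(g,h)$ and $(g',h')$ are adjacent iff ($g=g'$ and $hh'\in E(H)$), or ($gg'\in E(G)$ and $h=h'$), or ($gg'\in E(G)$ and $hh'\in E(H)$), or ($g\neq g'$, $h\neq h'$, $gg'\notin E(G)$ and $hh'\notin E(H)$). $N_X[v]$ denotes the closed neighborhood of $v$ in a graph $X$. A $\gamma_G$-pair is a set $\{g,g'\}$ of two distinct vertices of $G$ such that $N_G[g]\cap N_G[g']=\emptyset$ and $N_G[g]\cup N_G[g']=V(G)$ (i.e. the two closed neighborhoods partition $V(G)$). *)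

theory Defs
  imports Main
begin

definition simple_graph :: "'a set \<Rightarrow> ('a \<Rightarrow> 'a \<Rightarrow> bool) \<Rightarrow> bool" where
  "simple_graph V E \<longleftrightarrow> finite V \<and>
     (\<forall>x y. E x y \<longrightarrow> x \<in> V \<and> y \<in> V) \<and>
     (\<forall>x y. E x y \<longrightarrow> E y x) \<and>
     (\<forall>x. \<not> E x x)"

definition closed_nbhd :: "'a set \<Rightarrow> ('a \<Rightarrow> 'a \<Rightarrow> bool) \<Rightarrow> 'a \<Rightarrow> 'a set" where
  "closed_nbhd V E v = {u \<in> V. u = v \<or> E v u}"

definition modular_adj ::
  "'a set \<Rightarrow> ('a \<Rightarrow> 'a \<Rightarrow> bool) \<Rightarrow> 'b set \<Rightarrow> ('b \<Rightarrow> 'b \<Rightarrow> bool)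
     \<Rightarrow> ('a \<times> 'b) \<Rightarrow> ('a \<times> 'b) \<Rightarrow> bool" where
  "modular_adj VG EG VH EH p q \<longleftrightarrow>
     (case p of (g, h) \<Rightarrow> case q of (g', h') \<Rightarrow>
       g \<in> VG \<and> g' \<in> VG \<and> h \<in> VH \<and> h' \<in> VH \<and> (g, h) \<noteq> (g', h') \<and>
       ((g = g' \<and> EH h h') \<or> (EG g g' \<and> h = h') \<or> (EG g g' \<and> EH h h') \<or>
        (g \<noteq> g' \<and> h \<noteq> h' \<and> \<not> EG g g' \<and> \<not> EH h h')))"

definition gamma_pair :: "'a set \<Rightarrow> ('a \<Rightarrow> 'a \<Rightarrow> bool) \<Rightarrow> 'a \<Rightarrow> 'a \<Rightarrow> bool" where
  "gamma_pair V E g g' \<longleftrightarrow> g \<in> V \<and> g' \<in> V \<and> g \<noteq> g' \<and>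
     closed_nbhd V E g \<inter> closed_nbhd V E g' = {} \<and>
     closed_nbhd V E g \<union> closed_nbhd V E g' = V"

end

theory Submission
  imports Defs
begin

lemma key:
  assumes "simple_graph VG EG" and "simple_graph VH EH"
    and "g \<in> VG" and "h \<in> VH"
  shows "closed_nbhd (VG \<times> VH) (modular_adj VG EG VH EH) (g, h)
     = {(x,y). x \<in> VG \<and> y \<in> VH \<and> ((x \<in> closed_nbhd VG EG g) = (y \<in> closed_nbhd VH EH h))}"
  using assms unfolding closed_nbhd_def modular_adj_def simple_graph_def
  by auto

theorem mainTheorem2:
  fixes VG :: "'a set" and EG :: "'a \<Rightarrow> 'a \<Rightarrow> bool"
    and VH :: "'b set" and EH :: "'b \<Rightarrow> 'b \<Rightarrow> bool"
  assumes "simple_graph VG EG" and "simple_graph VH EH"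
    and "g \<in> VG" and "g' \<in> VG" and "h \<in> VH" and "h' \<in> VH"
  shows "closed_nbhd (VG \<times> VH) (modular_adj VG EG VH EH) (g, h)
           = closed_nbhd (VG \<times> VH) (modular_adj VG EG VH EH) (g', h')
         \<longleftrightarrow> (closed_nbhd VG EG g = closed_nbhd VG EG g' \<and>
              closed_nbhd VH EH h = closed_nbhd VH EH h')
           \<or> (gamma_pair VG EG g g' \<and> gamma_pair VH EH h h')"
proof -
  define A where "A = closed_nbhd VG EG g"
  define A' where "A' = closed_nbhd VG EG g'"
  define B where "B = closed_nbhd VH EH h"
  define B' where "B' = closed_nbhd VH EH h'"
  have sub: "A \<subseteq> VG" "A' \<subseteq> VG" "B \<subseteq> VH" "B' \<subseteq> VH"
    unfolding A_def A'_def B_def B'_def closed_nbhd_def by auto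
  have mem: "g \<in> A" "g' \<in> A'" "h \<in> B" "h' \<in> B'"
    using assms unfolding A_def A'_def B_def B'_def closed_nbhd_def by auto
  have eq: "closed_nbhd (VG \<times> VH) (modular_adj VG EG VH EH) (g, h)
           = closed_nbhd (VG \<times> VH) (modular_adj VG EG VH EH) (g', h')
        \<longleftrightarrow> (\<forall>x\<in>VG. \<forall>y\<in>VH. ((x \<in> A) = (y \<in> B)) = ((x \<in> A') = (y \<in> B')))"
    unfolding key[OF assms(1,2,3,5)] key[OF assms(1,2,4,6)] A_def A'_def B_def B'_def
    by (auto simp: set_eq_iff)
  have gp: "gamma_pair VG EG g g' \<longleftrightarrow> g \<noteq> g' \<and> A \<inter> A' = {} \<and> A \<union> A' = VG"
    "gamma_pair VH EH h h' \<longleftrightarrow> h \<noteq> h' \<and> B \<inter> B' = {} \<and> B \<union> B' = VH"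
    using assms unfolding gamma_pair_def A_def A'_def B_def B'_def by auto
  show ?thesis
    unfolding eq gp A_def[symmetric] A'_def[symmetric] B_def[symmetric] B'_def[symmetric]
  proof
    assume H: "\<forall>x\<in>VG. \<forall>y\<in>VH. ((x \<in> A) = (y \<in> B)) = ((x \<in> A') = (y \<in> B'))"
    show "A = A' \<and> B = B' \<or> (g \<noteq> g' \<and> A \<inter> A' = {} \<and> A \<union> A' = VG) \<and> (h \<noteq> h' \<and> B \<inter> B' = {} \<and> B \<union> B' = VH)"
    proof (cases "h \<in> B'")
      case True
      have "A = A'" using H True mem sub assms by blast
      moreover have "B = B'" using H True mem sub assms by blast
      ultimately show ?thesis by simp
    next
      case False
      have "g \<notin> A'" using H False mem assms by blast
      have "A \<inter> A' = {}" "A \<union> A' = VG" using H False mem sub assms by blast+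
      moreover have "B \<inter> B' = {}" "B \<union> B' = VH" using H False mem sub assms \<open>g \<notin> A'\<close> by blast+
      ultimately show ?thesis using mem by blast
    qed
  next
    assume "A = A' \<and> B = B' \<or> (g \<noteq> g' \<and> A \<inter> A' = {} \<and> A \<union> A' = VG) \<and> (h \<noteq> h' \<and> B \<inter> B' = {} \<and> B \<union> B' = VH)"
    then show "\<forall>x\<in>VG. \<forall>y\<in>VH. ((x \<in> A) = (y \<in> B)) = ((x \<in> A') = (y \<in> B'))"
      by blast
  qed
qed

end
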